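(* (1) Let $G$ be a group acting on an event structure $E$ (by automorphisms). Then the set $\mathcal S_G(E)$ of all bijections $\theta:x\cong y$ between configurations of $E$ such that $\theta$ is the restriction to $x$ of the automorphism $g:E\to E$ for some $g\in G$ (so $y=g(x)$) is an isomorphism family on $E$. (2) Let $(A,\mathcal N,\mathcal P,\lambda)$ be a game. Then $A$ equipped with $\mathcal S_-:=\mathcal S_{\mathcal N}(A)$, $\mathcal S_+:=\mathcal S_{\mathcal P}(A)$, and $\mathcal S$ the closure of $\mathcal S_-\cup\mathcal S_+$ under composition (of composable bijections), is a thin concurrent game.
   Context: An event structure (with polarity) is a set $E$ with a partial order $\leq$ such that every element has finitely many elements below it, an irreflexive symmetric relation $\#$ that is hereditary (if $a\leq a'$ and $a\#b$ then $a'\#b$), and a polarity function into $\{-,+\}$. A configuration is a finite down-closed conflict-free subset; $\mathrm{Conf}(E)$ denotes the set of them. $x\subseteq^+y$ (resp. $x\subseteq^-y$) means $x\subseteq y$ and every element of $y\setminus x$ is positive (resp. negative). An automorphism is a bijection preserving and reflecting $\leq$, $\#$ and polarity; an action of a group is a homomorphism into the automorphism group. An automorphism fixes $x$ if it is the identity on $x$; it is negative if whenever it fixes $x$ and $x\subseteq^+y$ it fixes $y$, positive if likewise with $\subseteq^-$. A game is $(A,\mathcal N,\mathcal P,\lambda)$ with $\mathcal N$ a group acting on $A$ by negative automorphisms, $\mathcal P$ a group acting by positive automorphisms, and $\lambda:\mathcal N\times\mathcal P\to\mathcal P\times\mathcal N$ satisfying for all $\alpha,\alpha'\in\mathcal N$,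 $\beta,\beta'\in\mathcal P$: (i) $\lambda(e,\beta)=(\beta,e)$, $\lambda(\alpha,e)=(e,\alpha)$; (ii) if $\lambda(\alpha',\beta)=(\beta_1,\alpha_1)$ and $\lambda(\alpha,\beta_1)=(\beta_2,\alpha_2)$ then $\lambda(\alpha\alpha',\beta)=(\beta_2,\alpha_2\alpha_1)$; (iii) if $\lambda(\alpha,\beta)=(\beta_1,\alpha_1)$ and $\lambda(\alpha_1,\beta')=(\beta_2,\alpha_2)$ then $\lambda(\alpha,\beta\beta')=(\beta_1\beta_2,\alpha_2)$; (iv) if $\lambda(\alpha,\beta)=(\beta',\alpha')$ then $\alpha(\beta(a))=\beta'(\alpha'(a))$ for all $a\in A$. For bijections $\theta:x\cong y$, $\theta':x'\cong y'$ between configurations, write $\theta\subseteq\theta'$ if $x\subseteq x'$ and $\theta'$ restricted to $x$ is $\theta$; write $\theta\subseteq^+\theta'$ (resp. $\subseteq^-$) if moreover $x\subseteq^+x'$ (resp. $x\subseteq^-x'$). An isomorphism family on $E$ is a set $\mathcal S$ of polarity-preserving bijections between configurations of $E$ containing all identities $\mathrm{id}_x$ ($x\in\mathrm{Conf}(E)$), closed under composition and inverses, such that for every $\theta:x\cong y$ in $\mathcal S$: (restriction) if $x'\subseteq x$ is a configuration then the restriction of $\theta$ to $x'$ is in $\mathcal S$; (extension) if $x\subseteq x'\in\mathrm{Conf}(E)$ then there is $\theta':x'\cong y'$ in $\mathcal S$ with $\theta\subseteq\theta'$. A thin concurrent game is an event structure $A$ with three isomorphism families $\mathcal S,\mathcal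 S_+,\mathcal S_-$ with $\mathcal S_+,\mathcal S_-\subseteq\mathcal S$ such that: if $\theta\in\mathcal S_+\cap\mathcal S_-$ then $\theta=\mathrm{id}_x$ for some configuration $x$; if $\theta\in\mathcal S_+$ and $\theta\subseteq^+\theta'\in\mathcal S$ then $\theta'\in\mathcal S_+$; if $\theta\in\mathcal S_-$ and $\theta\subseteq^-\theta'\in\mathcal S$ then $\theta'\in\mathcal S_-$. *)

theory Defs
  imports "HOL-Algebra.Group"
begin

datatype polarity = Minus | Plus

definition es :: "'a set \<Rightarrow> ('a \<Rightarrow> 'a \<Rightarrow> bool) \<Rightarrow> ('a \<Rightarrow> 'a \<Rightarrow> bool) \<Rightarrow> ('a \<Rightarrow> polarity) \<Rightarrow> bool" where
  "es E leq cf pol \<longleftrightarrow>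
     (\<forall>a\<in>E. leq a a) \<and>
     (\<forall>a\<in>E. \<forall>b\<in>E. leq a b \<and> leq b a \<longrightarrow> a = b) \<and>
     (\<forall>a\<in>E. \<forall>b\<in>E. \<forall>c\<in>E. leq a b \<and> leq b c \<longrightarrow> leq a c) \<and>
     (\<forall>a\<in>E. finite {b\<in>E. leq b a}) \<and>
     (\<forall>a\<in>E. \<not> cf a a) \<and>
     (\<forall>a\<in>E. \<forall>b\<in>E. cf a b \<longrightarrow> cf b a) \<and>
     (\<forall>a\<in>E. \<forall>a'\<in>E. \<forall>b\<in>E. leq a a' \<and> cf a b \<longrightarrow> cf a' b)"

definition conf :: "'a set \<Rightarrow> ('a \<Rightarrow> 'a \<Rightarrow> bool) \<Rightarrow> ('a \<Rightarrow> 'a \<Rightarrow> bool) \<Rightarrow> 'a set set" where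
  "conf E leq cf = {x. finite x \<and> x \<subseteq> E \<and>
       (\<forall>a\<in>x. \<forall>b\<in>E. leq b a \<longrightarrow> b \<in> x) \<and>
       (\<forall>a\<in>x. \<forall>b\<in>x. \<not> cf a b)}"

definition subset_pol :: "('a \<Rightarrow> polarity) \<Rightarrow> polarity \<Rightarrow> 'a set \<Rightarrow> 'a set \<Rightarrow> bool" where
  "subset_pol pol p x y \<longleftrightarrow> x \<subseteq> y \<and> (\<forall>e\<in>y - x. pol e = p)"

definition automorphism :: "'a set \<Rightarrow> ('a \<Rightarrow> 'a \<Rightarrow> bool) \<Rightarrow> ('a \<Rightarrow> 'a \<Rightarrow> bool) \<Rightarrow> ('a \<Rightarrow> polarity)
     \<Rightarrow> ('a \<Rightarrow> 'a) \<Rightarrow> bool" where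
  "automorphism E leq cf pol g \<longleftrightarrow> bij_betw g E E \<and>
     (\<forall>a\<in>E. \<forall>b\<in>E. leq (g a) (g b) \<longleftrightarrow> leq a b) \<and>
     (\<forall>a\<in>E. \<forall>b\<in>E. cf (g a) (g b) \<longleftrightarrow> cf a b) \<and>
     (\<forall>a\<in>E. pol (g a) = pol a)"

definition es_action :: "'a set \<Rightarrow> ('a \<Rightarrow> 'a \<Rightarrow> bool) \<Rightarrow> ('a \<Rightarrow> 'a \<Rightarrow> bool) \<Rightarrow> ('a \<Rightarrow> polarity)
     \<Rightarrow> ('g, 'b) monoid_scheme \<Rightarrow> ('g \<Rightarrow> 'a \<Rightarrow> 'a) \<Rightarrow> bool" where
  "es_action E leq cf pol G act \<longleftrightarrow> es E leq cf pol \<and> group G \<and>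
     (\<forall>g\<in>carrier G. automorphism E leq cf pol (act g)) \<and>
     (\<forall>g\<in>carrier G. \<forall>h\<in>carrier G. \<forall>a\<in>E. act (g \<otimes>\<^bsub>G\<^esub> h) a = act g (act h a)) \<and>
     (\<forall>a\<in>E. act \<one>\<^bsub>G\<^esub> a = a)"

definition fixes_conf :: "('a \<Rightarrow> 'a) \<Rightarrow> 'a set \<Rightarrow> bool" where
  "fixes_conf g x \<longleftrightarrow> (\<forall>a\<in>x. g a = a)"

definition neg_aut :: "'a set \<Rightarrow> ('a \<Rightarrow> 'a \<Rightarrow> bool) \<Rightarrow> ('a \<Rightarrow> 'a \<Rightarrow> bool) \<Rightarrow> ('a \<Rightarrow> polarity)
     \<Rightarrow> ('a \<Rightarrow> 'a) \<Rightarrow> bool" where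
  "neg_aut E leq cf pol g \<longleftrightarrow> (\<forall>x\<in>conf E leq cf. \<forall>y\<in>conf E leq cf.
       fixes_conf g x \<and> subset_pol pol Plus x y \<longrightarrow> fixes_conf g y)"

definition pos_aut :: "'a set \<Rightarrow> ('a \<Rightarrow> 'a \<Rightarrow> bool) \<Rightarrow> ('a \<Rightarrow> 'a \<Rightarrow> bool) \<Rightarrow> ('a \<Rightarrow> polarity)
     \<Rightarrow> ('a \<Rightarrow> 'a) \<Rightarrow> bool" where
  "pos_aut E leq cf pol g \<longleftrightarrow> (\<forall>x\<in>conf E leq cf. \<forall>y\<in>conf E leq cf.
       fixes_conf g x \<and> subset_pol pol Minus x y \<longrightarrow> fixes_conf g y)"

definition game :: "'a set \<Rightarrow> ('a \<Rightarrow> 'a \<Rightarrow> bool) \<Rightarrow> ('a \<Rightarrow> 'a \<Rightarrow> bool) \<Rightarrow> ('a \<Rightarrow> polarity)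
   \<Rightarrow> 'n monoid \<Rightarrow> ('n \<Rightarrow> 'a \<Rightarrow> 'a) \<Rightarrow> 'p monoid \<Rightarrow> ('p \<Rightarrow> 'a \<Rightarrow> 'a)
   \<Rightarrow> ('n \<Rightarrow> 'p \<Rightarrow> 'p \<times> 'n) \<Rightarrow> bool" where
  "game A leq cf pol N actN P actP lam \<longleftrightarrow>
     es_action A leq cf pol N actN \<and> es_action A leq cf pol P actP \<and>
     (\<forall>\<alpha>\<in>carrier N. neg_aut A leq cf pol (actN \<alpha>)) \<and>
     (\<forall>\<beta>\<in>carrier P. pos_aut A leq cf pol (actP \<beta>)) \<and>
     (\<forall>\<alpha>\<in>carrier N. \<forall>\<beta>\<in>carrier P. lam \<alpha> \<beta> \<in> carrier P \<times> carrier N) \<and>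
     (\<forall>\<beta>\<in>carrier P. lam \<one>\<^bsub>N\<^esub> \<beta> = (\<beta>, \<one>\<^bsub>N\<^esub>)) \<and>
     (\<forall>\<alpha>\<in>carrier N. lam \<alpha> \<one>\<^bsub>P\<^esub> = (\<one>\<^bsub>P\<^esub>, \<alpha>)) \<and>
     (\<forall>\<alpha>\<in>carrier N. \<forall>\<alpha>'\<in>carrier N. \<forall>\<beta>\<in>carrier P. \<forall>\<beta>1 \<alpha>1 \<beta>2 \<alpha>2.
        lam \<alpha>' \<beta> = (\<beta>1, \<alpha>1) \<and> lam \<alpha> \<beta>1 = (\<beta>2, \<alpha>2) \<longrightarrow>
        lam (\<alpha> \<otimes>\<^bsub>N\<^esub> \<alpha>') \<beta> = (\<beta>2, \<alpha>2 \<otimes>\<^bsub>N\<^esub> \<alpha>1)) \<and>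
     (\<forall>\<alpha>\<in>carrier N. \<forall>\<beta>\<in>carrier P. \<forall>\<beta>'\<in>carrier P. \<forall>\<beta>1 \<alpha>1 \<beta>2 \<alpha>2.
        lam \<alpha> \<beta> = (\<beta>1, \<alpha>1) \<and> lam \<alpha>1 \<beta>' = (\<beta>2, \<alpha>2) \<longrightarrow>
        lam \<alpha> (\<beta> \<otimes>\<^bsub>P\<^esub> \<beta>') = (\<beta>1 \<otimes>\<^bsub>P\<^esub> \<beta>2, \<alpha>2)) \<and>
     (\<forall>\<alpha>\<in>carrier N. \<forall>\<beta>\<in>carrier P. \<forall>\<beta>' \<alpha>'.
        lam \<alpha> \<beta> = (\<beta>', \<alpha>') \<longrightarrow> (\<forall>a\<in>A. actN \<alpha> (actP \<beta> a) = actP \<beta>' (actN \<alpha>' a)))"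

text \<open>Bijections between configurations are represented by their graphs.
  theta : x \<cong> y.\<close>
definition bij_rel :: "('a \<times> 'a) set \<Rightarrow> 'a set \<Rightarrow> 'a set \<Rightarrow> bool" where
  "bij_rel \<theta> x y \<longleftrightarrow> \<theta> \<subseteq> x \<times> y \<and> (\<forall>a\<in>x. \<exists>!b. (a, b) \<in> \<theta>) \<and> (\<forall>b\<in>y. \<exists>!a. (a, b) \<in> \<theta>)"

definition pol_pres :: "('a \<Rightarrow> polarity) \<Rightarrow> ('a \<times> 'a) set \<Rightarrow> bool" where
  "pol_pres pol \<theta> \<longleftrightarrow> (\<forall>(a, b)\<in>\<theta>. pol a = pol b)"

definition restr :: "('a \<times> 'a) set \<Rightarrow> 'a set \<Rightarrow> ('a \<times> 'a) set" where
  "restr \<theta> x = {(a, b) \<in> \<theta>. a \<in> x}"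

definition ext_le :: "('a \<times> 'a) set \<Rightarrow> ('a \<times> 'a) set \<Rightarrow> bool" where
  "ext_le \<theta> \<theta>' \<longleftrightarrow> Domain \<theta> \<subseteq> Domain \<theta>' \<and> restr \<theta>' (Domain \<theta>) = \<theta>"

definition ext_le_pol :: "('a \<Rightarrow> polarity) \<Rightarrow> polarity \<Rightarrow> ('a \<times> 'a) set \<Rightarrow> ('a \<times> 'a) set \<Rightarrow> bool" where
  "ext_le_pol pol p \<theta> \<theta>' \<longleftrightarrow> ext_le \<theta> \<theta>' \<and> subset_pol pol p (Domain \<theta>) (Domain \<theta>')"

definition iso_family :: "'a set \<Rightarrow> ('a \<Rightarrow> 'a \<Rightarrow> bool) \<Rightarrow> ('a \<Rightarrow> 'a \<Rightarrow> bool) \<Rightarrow> ('a \<Rightarrow> polarity)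
     \<Rightarrow> ('a \<times> 'a) set set \<Rightarrow> bool" where
  "iso_family E leq cf pol S \<longleftrightarrow>
     (\<forall>\<theta>\<in>S. (\<exists>x\<in>conf E leq cf. \<exists>y\<in>conf E leq cf. bij_rel \<theta> x y) \<and> pol_pres pol \<theta>) \<and>
     (\<forall>x\<in>conf E leq cf. Id_on x \<in> S) \<and>
     (\<forall>\<theta>\<in>S. \<forall>\<theta>'\<in>S. Range \<theta> = Domain \<theta>' \<longrightarrow> \<theta> O \<theta>' \<in> S) \<and>
     (\<forall>\<theta>\<in>S. converse \<theta> \<in> S) \<and>
     (\<forall>\<theta>\<in>S. \<forall>x'\<in>conf E leq cf. x' \<subseteq> Domain \<theta> \<longrightarrow> restr \<theta> x' \<in> S) \<and>
     (\<forall>\<theta>\<in>S. \<forall>x'\<in>conf E leq cf. Domain \<theta> \<subseteq> x' \<longrightarrow>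
        (\<exists>\<theta>'\<in>S. Domain \<theta>' = x' \<and> ext_le \<theta> \<theta>'))"

definition S_act :: "'a set \<Rightarrow> ('a \<Rightarrow> 'a \<Rightarrow> bool) \<Rightarrow> ('a \<Rightarrow> 'a \<Rightarrow> bool)
     \<Rightarrow> ('g, 'b) monoid_scheme \<Rightarrow> ('g \<Rightarrow> 'a \<Rightarrow> 'a) \<Rightarrow> ('a \<times> 'a) set set" where
  "S_act E leq cf G act = {\<theta>. \<exists>x\<in>conf E leq cf. \<exists>g\<in>carrier G. \<theta> = {(a, act g a) | a. a \<in> x}}"

text \<open>Closure under composition of composable bijections
  (theta : x \<cong> y, theta' : y \<cong> z gives theta' \<circ> theta = theta O theta').\<close>
inductive_set comp_closure :: "('a \<times> 'a) set set \<Rightarrow> ('a \<times> 'a) set set" for T where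
  base: "\<theta> \<in> T \<Longrightarrow> \<theta> \<in> comp_closure T"
| comp: "\<theta> \<in> comp_closure T \<Longrightarrow> \<theta>' \<in> comp_closure T \<Longrightarrow> Range \<theta> = Domain \<theta>' \<Longrightarrow>
         \<theta> O \<theta>' \<in> comp_closure T"

definition thin_cg :: "'a set \<Rightarrow> ('a \<Rightarrow> 'a \<Rightarrow> bool) \<Rightarrow> ('a \<Rightarrow> 'a \<Rightarrow> bool) \<Rightarrow> ('a \<Rightarrow> polarity)
     \<Rightarrow> ('a \<times> 'a) set set \<Rightarrow> ('a \<times> 'a) set set \<Rightarrow> ('a \<times> 'a) set set \<Rightarrow> bool" where
  "thin_cg A leq cf pol S Sp Sm \<longleftrightarrow> es A leq cf pol \<and>
     iso_family A leq cf pol S \<and> iso_family A leq cf pol Sp \<and> iso_family A leq cf pol Sm \<and>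
     Sp \<subseteq> S \<and> Sm \<subseteq> S \<and>
     (\<forall>\<theta>\<in>Sp \<inter> Sm. \<exists>x\<in>conf A leq cf. \<theta> = Id_on x) \<and>
     (\<forall>\<theta>\<in>Sp. \<forall>\<theta>'\<in>S. ext_le_pol pol Plus \<theta> \<theta>' \<longrightarrow> \<theta>' \<in> Sp) \<and>
     (\<forall>\<theta>\<in>Sm. \<forall>\<theta>'\<in>S. ext_le_pol pol Minus \<theta> \<theta>' \<longrightarrow> \<theta>' \<in> Sm)"

end

theory Submission
  imports Defs
begin

definition gr :: "('a \<Rightarrow> 'a) \<Rightarrow> 'a set \<Rightarrow> ('a \<times> 'a) set" where
  "gr f x = {(a, f a) | a. a \<in> x}"

lemma gr_Domain[simp]: "Domain (gr f x) = x" unfolding gr_def by auto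
lemma gr_Range[simp]: "Range (gr f x) = f ` x" unfolding gr_def by auto
lemma gr_mem: "(a, b) \<in> gr f x \<longleftrightarrow> a \<in> x \<and> b = f a" unfolding gr_def by auto

lemma gr_comp: "gr f x O gr g (f ` x) = gr (g \<circ> f) x" unfolding gr_def by auto
lemma gr_cong: "(\<And>a. a \<in> x \<Longrightarrow> f a = g a) \<Longrightarrow> gr f x = gr g x" unfolding gr_def by auto
lemma gr_restr: "restr (gr f x) x' = gr f (x \<inter> x')" unfolding gr_def restr_def by auto
lemma gr_conv: "(\<And>a. a \<in> x \<Longrightarrow> g (f a) = a) \<Longrightarrow> converse (gr f x) = gr g (f ` x)"
  unfolding gr_def by force

lemma conf_sub: "x \<in> conf E leq cf \<Longrightarrow> x \<subseteq> E" unfolding conf_def by auto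

lemma aut_conf:
  assumes "automorphism E leq cf pol g" "x \<in> conf E leq cf"
  shows "g ` x \<in> conf E leq cf"
proof -
  have b: "bij_betw g E E" and l: "\<forall>a\<in>E. \<forall>b\<in>E. leq (g a) (g b) \<longleftrightarrow> leq a b"
    and c: "\<forall>a\<in>E. \<forall>b\<in>E. cf (g a) (g b) \<longleftrightarrow> cf a b"
    using assms(1) unfolding automorphism_def by auto
  have xE: "x \<subseteq> E" and fx: "finite x" and dc: "\<forall>a\<in>x. \<forall>b\<in>E. leq b a \<longrightarrow> b \<in> x"
    and cfx: "\<forall>a\<in>x. \<forall>b\<in>x. \<not> cf a b" using assms(2) unfolding conf_def by auto
  have gE: "g ` E = E" using b by (simp add: bij_betw_def)
  show ?thesis unfolding conf_def
  proof (intro CollectI conjI ballI impI)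
    show "finite (g ` x)" using fx by simp
    show "g ` x \<subseteq> E" using xE gE by auto
  next
    fix a b assume a: "a \<in> g ` x" and bE: "b \<in> E" and le: "leq b a"
    then obtain a0 where a0: "a0 \<in> x" "a = g a0" by auto
    obtain b0 where b0: "b0 \<in> E" "b = g b0" using bE gE by auto
    have "leq b0 a0" using l le a0 b0 xE by auto
    then have "b0 \<in> x" using dc a0 b0 by auto
    then show "b \<in> g ` x" using b0 by auto
  next
    fix a b assume "a \<in> g ` x" "b \<in> g ` x"
    then obtain a0 b0 where "a0 \<in> x" "b0 \<in> x" "a = g a0" "b = g b0" by auto
    then show "\<not> cf a b" using c cfx xE by (metis subsetD)
  qed
qed

lemma aut_gr:
  assumes "automorphism E leq cf pol g" "x \<in> conf E leq cf"
  shows "bij_rel (gr g x) x (g ` x) \<and> pol_pres pol (gr g x)"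
proof -
  have b: "bij_betw g E E" and p: "\<forall>a\<in>E. pol (g a) = pol a"
    using assms(1) unfolding automorphism_def by auto
  have xE: "x \<subseteq> E" using conf_sub[OF assms(2)] .
  have inj: "inj_on g x" using b xE by (meson bij_betw_def inj_on_subset)
  show ?thesis unfolding bij_rel_def pol_pres_def gr_def
    using inj xE p by (auto simp: inj_on_def)
qed

lemma aut_comp:
  assumes "automorphism E leq cf pol f" "automorphism E leq cf pol g"
  shows "automorphism E leq cf pol (g \<circ> f)"
proof -
  have fE: "\<And>a. a \<in> E \<Longrightarrow> f a \<in> E" using assms(1) unfolding automorphism_def bij_betw_def by auto
  show ?thesis using assms fE unfolding automorphism_def
    by (auto intro: bij_betw_trans)
qed

definition graphs :: "'a set \<Rightarrow> ('a \<Rightarrow> 'a \<Rightarrow> bool) \<Rightarrow> ('a \<Rightarrow> 'a \<Rightarrow> bool) \<Rightarrow> ('a \<Rightarrow> 'a) set \<Rightarrow> ('a \<times> 'a) set set" where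
  "graphs E leq cf F = {\<theta>. \<exists>x\<in>conf E leq cf. \<exists>f\<in>F. \<theta> = gr f x}"

lemma graphs_iso:
  assumes aut: "\<forall>f\<in>F. automorphism E leq cf pol f"
    and cmp: "\<forall>f\<in>F. \<forall>g\<in>F. \<exists>h\<in>F. \<forall>a\<in>E. h a = g (f a)"
    and idF: "\<exists>h\<in>F. \<forall>a\<in>E. h a = a"
    and invF: "\<forall>f\<in>F. \<exists>g\<in>F. \<forall>a\<in>E. g (f a) = a"
  shows "iso_family E leq cf pol (graphs E leq cf F)"
  unfolding iso_family_def
proof (intro conjI ballI impI)
  fix \<theta> assume "\<theta> \<in> graphs E leq cf F"
  then obtain x f where x: "x \<in> conf E leq cf" and f: "f \<in> F" and t: "\<theta> = gr f x"
    unfolding graphs_def by auto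
  show "\<exists>x\<in>conf E leq cf. \<exists>y\<in>conf E leq cf. bij_rel \<theta> x y"
    using aut_gr[of E leq cf pol f x] aut_conf[of E leq cf pol f x] aut f x t by blast
  show "pol_pres pol \<theta>"
    using aut_gr[of E leq cf pol f x] aut f x t by blast
next
  fix x assume x: "x \<in> conf E leq cf"
  obtain h where h: "h \<in> F" "\<forall>a\<in>E. h a = a" using idF by auto
  have "Id_on x = gr h x" using h conf_sub[OF x] unfolding gr_def by auto
  then show "Id_on x \<in> graphs E leq cf F" using x h unfolding graphs_def by auto
next
  fix \<theta> \<theta>' assume "\<theta> \<in> graphs E leq cf F" "\<theta>' \<in> graphs E leq cf F" and r: "Range \<theta> = Domain \<theta>'"
  then obtain x f x' g where x: "x \<in> conf E leq cf" and f: "f \<in> F" and t: "\<theta> = gr f x"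
     and g: "g \<in> F" and t': "\<theta>' = gr g x'"
    unfolding graphs_def by auto
  have x': "x' = f ` x" using r t t' by simp
  obtain h where h: "h \<in> F" "\<forall>a\<in>E. h a = g (f a)" using cmp f g by blast
  have "\<theta> O \<theta>' = gr h x" unfolding t t' x' gr_comp
    using h conf_sub[OF x] by (intro gr_cong) auto
  then show "\<theta> O \<theta>' \<in> graphs E leq cf F" using x h unfolding graphs_def by auto
next
  fix \<theta> assume "\<theta> \<in> graphs E leq cf F"
  then obtain x f where x: "x \<in> conf E leq cf" and f: "f \<in> F" and t: "\<theta> = gr f x"
    unfolding graphs_def by auto
  obtain g where g: "g \<in> F" "\<forall>a\<in>E. g (f a) = a" using invF f by blast
  have "converse \<theta> = gr g (f ` x)" unfolding t using g conf_sub[OF x] by (intro gr_conv) auto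
  moreover have "f ` x \<in> conf E leq cf" using aut_conf aut f x by blast
  ultimately show "converse \<theta> \<in> graphs E leq cf F" using g unfolding graphs_def by auto
next
  fix \<theta> x' assume "\<theta> \<in> graphs E leq cf F" and x': "x' \<in> conf E leq cf" "x' \<subseteq> Domain \<theta>"
  then obtain x f where x: "x \<in> conf E leq cf" and f: "f \<in> F" and t: "\<theta> = gr f x"
    unfolding graphs_def by auto
  have "restr \<theta> x' = gr f x'" using x' t gr_restr[of f x x'] by (simp add: Int_absorb1)
  then show "restr \<theta> x' \<in> graphs E leq cf F" using x' f unfolding graphs_def by auto
next
  fix \<theta> x' assume "\<theta> \<in> graphs E leq cf F" and x': "x' \<in> conf E leq cf" "Domain \<theta> \<subseteq> x'"
  then obtain x f where x: "x \<in> conf E leq cf" and f: "f \<in> F" and t: "\<theta> = gr f x"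
    unfolding graphs_def by auto
  have "ext_le \<theta> (gr f x')" unfolding ext_le_def using x' t gr_restr[of f x' x]
    by (simp add: Int_absorb1 Int_commute)
  then show "\<exists>\<theta>'\<in>graphs E leq cf F. Domain \<theta>' = x' \<and> ext_le \<theta> \<theta>'"
    using x' f unfolding graphs_def by (metis (mono_tags, lifting) gr_Domain mem_Collect_eq)
qed

lemma K:
  assumes es: "es A leq cf pol" and na: "neg_aut A leq cf pol fa" and pb: "pos_aut A leq cf pol fb"
    and x: "x \<in> conf A leq cf" and agree: "\<forall>a\<in>x. fa a = fb a"
  shows "\<forall>a\<in>x. fb a = a"
proof -
  note e = es[unfolded es_def]
  note refl = e[THEN conjunct1] and antis = e[THEN conjunct2, THEN conjunct1]
    and trans = e[THEN conjunct2, THEN conjunct2, THEN conjunct1]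
    and fin = e[THEN conjunct2, THEN conjunct2, THEN conjunct2, THEN conjunct1]
  have xA: "x \<subseteq> A" and dc: "\<forall>a\<in>x. \<forall>b\<in>A. leq b a \<longrightarrow> b \<in> x"
    and cfx: "\<forall>a\<in>x. \<forall>b\<in>x. \<not> cf a b" using x unfolding conf_def by auto
  have main: "\<forall>a. a \<in> x \<longrightarrow> card {b\<in>A. leq b a} = n \<longrightarrow> fb a = a" for n
  proof (induction n rule: less_induct)
    case (less n)
    show ?case
    proof (intro allI impI)
      fix a assume ax: "a \<in> x" and cn: "card {b\<in>A. leq b a} = n"
      define z where "z = {b\<in>A. leq b a}"
      define y where "y = z - {a}"
      have aA: "a \<in> A" using ax xA by auto
      have zx: "z \<subseteq> x" using dc ax unfolding z_def by auto
      have az: "a \<in> z" using aA refl unfolding z_def by auto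
      have fz: "finite z" using fin aA unfolding z_def by auto
      have zc: "z \<in> conf A leq cf" unfolding conf_def
      proof (intro CollectI conjI ballI impI)
        show "finite z" by (rule fz)
        show "z \<subseteq> A" unfolding z_def by auto
      next
        fix b c assume b: "b \<in> z" and c: "c \<in> A" "leq c b"
        have "b \<in> A" "leq b a" using b unfolding z_def by auto
        then have "leq c a" using trans[rule_format, of c b a] c aA by simp
        then show "c \<in> z" using c unfolding z_def by simp
      next
        fix b c assume "b \<in> z" "c \<in> z" then show "\<not> cf b c" using zx cfx by auto
      qed
      have yc: "y \<in> conf A leq cf" unfolding conf_def
      proof (intro CollectI conjI ballI impI)
        show "finite y" using fz unfolding y_def by auto
        show "y \<subseteq> A" unfolding y_def z_def by auto
      next
        fix b c assume b: "b \<in> y" and c: "c \<in> A" "leq c b"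
        have "b \<in> A" "leq b a" using b unfolding y_def z_def by auto
        then have "leq c a" using trans[rule_format, of c b a] c aA by simp
        then have cz: "c \<in> z" using c unfolding z_def by simp
        have "c \<noteq> a"
        proof
          assume "c = a"
          then have "leq a b" "leq b a" "b \<in> A" "b \<noteq> a" using c b unfolding y_def z_def by auto
          then show False using antis[rule_format, of a b] aA by simp
        qed
        then show "c \<in> y" using cz unfolding y_def by auto
      next
        fix b c assume "b \<in> y" "c \<in> y" then show "\<not> cf b c" using zx cfx unfolding y_def by auto
      qed
      have fy: "\<forall>b\<in>y. fb b = b"
      proof
        fix b assume b: "b \<in> y"
        have bA: "b \<in> A" "leq b a" "b \<noteq> a" using b unfolding y_def z_def by auto
        have sub: "{c\<in>A. leq c b} \<subseteq> z" using trans[rule_format, of _ b a] bA aA unfolding z_def by auto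
        have "a \<notin> {c\<in>A. leq c b}" using antis[rule_format, of a b] bA aA by auto
        then have "{c\<in>A. leq c b} \<subset> z" using sub az by blast
        then have "card {c\<in>A. leq c b} < n" using cn fz unfolding z_def[symmetric]
          using psubset_card_mono by metis
        moreover have "b \<in> x" using b zx unfolding y_def by auto
        ultimately show "fb b = b" using less.IH by blast
      qed
      have fya: "\<forall>b\<in>y. fa b = b"
      proof
        fix b assume "b \<in> y"
        then have "b \<in> x" "fb b = b" using fy zx unfolding y_def by auto
        then show "fa b = b" using agree by auto
      qed
      have zy: "z - y = {a}" using az unfolding y_def by auto
      show "fb a = a"
      proof (cases "pol a")
        case Minus
        have "subset_pol pol Minus y z" unfolding subset_pol_def using zy Minus unfolding y_def by auto
        moreover have "fixes_conf fb y" using fy unfolding fixes_conf_def by simp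
        ultimately have "fixes_conf fb z" using pb yc zc unfolding pos_aut_def by blast
        then show ?thesis using az unfolding fixes_conf_def by auto
      next
        case Plus
        have "subset_pol pol Plus y z" unfolding subset_pol_def using zy Plus unfolding y_def by auto
        moreover have "fixes_conf fa y" using fya unfolding fixes_conf_def by simp
        ultimately have "fixes_conf fa z" using na yc zc unfolding neg_aut_def by blast
        then show ?thesis using az agree ax unfolding fixes_conf_def by auto
      qed
    qed
  qed
  show ?thesis using main by blast
qed

lemma act_facts:
  assumes "es_action E leq cf pol G act"
  shows "group G" "es E leq cf pol"
    "\<And>g. g \<in> carrier G \<Longrightarrow> automorphism E leq cf pol (act g)"
    "\<And>g h a. g \<in> carrier G \<Longrightarrow> h \<in> carrier G \<Longrightarrow> a \<in> E \<Longrightarrow> act (g \<otimes>\<^bsub>G\<^esub> h) a = act g (act h a)"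
    "\<And>a. a \<in> E \<Longrightarrow> act \<one>\<^bsub>G\<^esub> a = a"
    "\<And>g a. g \<in> carrier G \<Longrightarrow> a \<in> E \<Longrightarrow> act g a \<in> E"
    "\<And>g a. g \<in> carrier G \<Longrightarrow> a \<in> E \<Longrightarrow> act (inv\<^bsub>G\<^esub> g) (act g a) = a"
proof -
  show g: "group G" and "es E leq cf pol" using assms unfolding es_action_def by auto
  show au: "\<And>g. g \<in> carrier G \<Longrightarrow> automorphism E leq cf pol (act g)"
    using assms unfolding es_action_def by auto
  show m: "\<And>g h a. g \<in> carrier G \<Longrightarrow> h \<in> carrier G \<Longrightarrow> a \<in> E \<Longrightarrow> act (g \<otimes>\<^bsub>G\<^esub> h) a = act g (act h a)"
    using assms unfolding es_action_def by auto
  show o: "\<And>a. a \<in> E \<Longrightarrow> act \<one>\<^bsub>G\<^esub> a = a"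
    using assms unfolding es_action_def by auto
  show "\<And>g a. g \<in> carrier G \<Longrightarrow> a \<in> E \<Longrightarrow> act g a \<in> E"
  proof -
    fix g a assume "g \<in> carrier G" "a \<in> E"
    moreover have "act g ` E = E" using au[OF \<open>g \<in> carrier G\<close>] unfolding automorphism_def bij_betw_def by simp
    ultimately show "act g a \<in> E" by blast
  qed
  fix g a assume "g \<in> carrier G" "a \<in> E"
  then show "act (inv\<^bsub>G\<^esub> g) (act g a) = a"
    using m[of "inv\<^bsub>G\<^esub> g" g a] o g by (simp add: group.l_inv group.inv_closed)
qed

lemma S_act_graphs: "S_act E leq cf G act = graphs E leq cf (act ` carrier G)"
  unfolding S_act_def graphs_def gr_def by auto

lemma part1:
  assumes "es_action E leq cf pol G act"
  shows "iso_family E leq cf pol (S_act E leq cf G act)"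
  unfolding S_act_graphs
proof (rule graphs_iso)
  note f = act_facts[OF assms]
  show "\<forall>f\<in>act ` carrier G. automorphism E leq cf pol f" using f(3) by auto
  show "\<forall>f\<in>act ` carrier G. \<forall>g\<in>act ` carrier G. \<exists>h\<in>act ` carrier G. \<forall>a\<in>E. h a = g (f a)"
  proof (intro ballI)
    fix f g assume "f \<in> act ` carrier G" "g \<in> act ` carrier G"
    then obtain p q where pq: "p \<in> carrier G" "q \<in> carrier G" "f = act p" "g = act q" by auto
    have "q \<otimes>\<^bsub>G\<^esub> p \<in> carrier G" using pq f(1) by (simp add: group.is_monoid monoid.m_closed)
    then show "\<exists>h\<in>act ` carrier G. \<forall>a\<in>E. h a = g (f a)" using pq f(4) by blast
  qed
  have "\<one>\<^bsub>G\<^esub> \<in> carrier G" using f(1) by (simp add: group.is_monoid monoid.one_closed)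
  then show "\<exists>h\<in>act ` carrier G. \<forall>a\<in>E. h a = a" using f(5) by blast
  show "\<forall>f\<in>act ` carrier G. \<exists>g\<in>act ` carrier G. \<forall>a\<in>E. g (f a) = a"
  proof
    fix f assume "f \<in> act ` carrier G"
    then obtain p where p: "p \<in> carrier G" "f = act p" by auto
    have "inv\<^bsub>G\<^esub> p \<in> carrier G" using p f(1) by (simp add: group.inv_closed)
    then show "\<exists>g\<in>act ` carrier G. \<forall>a\<in>E. g (f a) = a" using p f(7) by blast
  qed
qed


lemma game_facts:
  assumes "game A leq cf pol N actN P actP lam"
  shows "es_action A leq cf pol N actN" "es_action A leq cf pol P actP"
    "\<forall>\<alpha>\<in>carrier N. neg_aut A leq cf pol (actN \<alpha>)"
    "\<forall>\<beta>\<in>carrier P. pos_aut A leq cf pol (actP \<beta>)"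
    "\<forall>\<alpha>\<in>carrier N. \<forall>\<beta>\<in>carrier P. lam \<alpha> \<beta> \<in> carrier P \<times> carrier N"
    "\<forall>\<alpha>\<in>carrier N. \<forall>\<beta>\<in>carrier P. \<forall>\<beta>' \<alpha>'.
        lam \<alpha> \<beta> = (\<beta>', \<alpha>') \<longrightarrow> (\<forall>a\<in>A. actN \<alpha> (actP \<beta> a) = actP \<beta>' (actN \<alpha>' a))"
proof -
  note e = assms[unfolded game_def]
  show "es_action A leq cf pol N actN" using e by (rule conjunct1)
  show "es_action A leq cf pol P actP" using e[THEN conjunct2] by (rule conjunct1)
  show "\<forall>\<alpha>\<in>carrier N. neg_aut A leq cf pol (actN \<alpha>)" using e[THEN conjunct2, THEN conjunct2] by (rule conjunct1)
  show "\<forall>\<beta>\<in>carrier P. pos_aut A leq cf pol (actP \<beta>)" using e[THEN conjunct2, THEN conjunct2, THEN conjunct2] by (rule conjunct1)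
  show "\<forall>\<alpha>\<in>carrier N. \<forall>\<beta>\<in>carrier P. lam \<alpha> \<beta> \<in> carrier P \<times> carrier N"
    using e[THEN conjunct2, THEN conjunct2, THEN conjunct2, THEN conjunct2] by (rule conjunct1)
  show "\<forall>\<alpha>\<in>carrier N. \<forall>\<beta>\<in>carrier P. \<forall>\<beta>' \<alpha>'.
        lam \<alpha> \<beta> = (\<beta>', \<alpha>') \<longrightarrow> (\<forall>a\<in>A. actN \<alpha> (actP \<beta> a) = actP \<beta>' (actN \<alpha>' a))"
    using e[THEN conjunct2, THEN conjunct2, THEN conjunct2, THEN conjunct2, THEN conjunct2,
      THEN conjunct2, THEN conjunct2, THEN conjunct2, THEN conjunct2] .
qed

lemma swap:
  assumes g: "game A leq cf pol N actN P actP lam" and \<alpha>: "\<alpha> \<in> carrier N" and \<beta>: "\<beta> \<in> carrier P"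
  shows "\<exists>\<alpha>'\<in>carrier N. \<exists>\<beta>'\<in>carrier P. \<forall>a\<in>A. actN \<alpha> (actP \<beta> a) = actP \<beta>' (actN \<alpha>' a)"
proof -
  obtain \<beta>' \<alpha>' where l: "lam \<alpha> \<beta> = (\<beta>', \<alpha>')" by (cases "lam \<alpha> \<beta>") auto
  have "\<beta>' \<in> carrier P" "\<alpha>' \<in> carrier N" using game_facts(5)[OF g] \<alpha> \<beta> l by force+
  moreover have "\<forall>a\<in>A. actN \<alpha> (actP \<beta> a) = actP \<beta>' (actN \<alpha>' a)"
    using game_facts(6)[OF g] \<alpha> \<beta> l by blast
  ultimately show ?thesis by blast
qed

lemma swap2:
  assumes g: "game A leq cf pol N actN P actP lam" and \<alpha>: "\<alpha> \<in> carrier N" and \<beta>: "\<beta> \<in> carrier P"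
  shows "\<exists>\<alpha>'\<in>carrier N. \<exists>\<beta>'\<in>carrier P. \<forall>a\<in>A. actP \<beta> (actN \<alpha> a) = actN \<alpha>' (actP \<beta>' a)"
proof -
  note fN = act_facts[OF game_facts(1)[OF g]] and fP = act_facts[OF game_facts(2)[OF g]]
  have ia: "inv\<^bsub>N\<^esub> \<alpha> \<in> carrier N" using \<alpha> fN(1) by (simp add: group.inv_closed)
  have ib: "inv\<^bsub>P\<^esub> \<beta> \<in> carrier P" using \<beta> fP(1) by (simp add: group.inv_closed)
  obtain \<alpha>' \<beta>' where a': "\<alpha>' \<in> carrier N" and b': "\<beta>' \<in> carrier P"
    and e: "\<forall>a\<in>A. actN (inv\<^bsub>N\<^esub> \<alpha>) (actP (inv\<^bsub>P\<^esub> \<beta>) a) = actP \<beta>' (actN \<alpha>' a)"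
    using swap[OF g ia ib] by blast
  have ia': "inv\<^bsub>N\<^esub> \<alpha>' \<in> carrier N" using a' fN(1) by (simp add: group.inv_closed)
  have ib': "inv\<^bsub>P\<^esub> \<beta>' \<in> carrier P" using b' fP(1) by (simp add: group.inv_closed)
  have "\<forall>a\<in>A. actP \<beta> (actN \<alpha> a) = actN (inv\<^bsub>N\<^esub> \<alpha>') (actP (inv\<^bsub>P\<^esub> \<beta>') a)"
  proof
    fix a assume a: "a \<in> A"
    define b where "b = actP \<beta> (actN \<alpha> a)"
    have aA: "actN \<alpha> a \<in> A" using fN(6) \<alpha> a by blast
    have bA: "b \<in> A" unfolding b_def using fP(6) \<beta> aA by blast
    have "actP (inv\<^bsub>P\<^esub> \<beta>) b = actN \<alpha> a" unfolding b_def using fP(7) \<beta> aA by blast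
    then have "actN (inv\<^bsub>N\<^esub> \<alpha>) (actP (inv\<^bsub>P\<^esub> \<beta>) b) = a" using fN(7) \<alpha> a by simp
    then have 1: "actP \<beta>' (actN \<alpha>' b) = a" using e bA by simp
    have cA: "actN \<alpha>' b \<in> A" using fN(6) a' bA by blast
    have "actP (inv\<^bsub>P\<^esub> \<beta>') a = actN \<alpha>' b" using 1 fP(7) b' cA by metis
    then have "actN (inv\<^bsub>N\<^esub> \<alpha>') (actP (inv\<^bsub>P\<^esub> \<beta>') a) = b" using fN(7) a' bA by simp
    then show "actP \<beta> (actN \<alpha> a) = actN (inv\<^bsub>N\<^esub> \<alpha>') (actP (inv\<^bsub>P\<^esub> \<beta>') a)" unfolding b_def by simp
  qed
  then show ?thesis using ia' ib' by blast
qed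

definition FPN :: "('n, 'b) monoid_scheme \<Rightarrow> ('n \<Rightarrow> 'a \<Rightarrow> 'a) \<Rightarrow> ('p, 'c) monoid_scheme \<Rightarrow> ('p \<Rightarrow> 'a \<Rightarrow> 'a) \<Rightarrow> ('a \<Rightarrow> 'a) set" where
  "FPN N actN P actP = {f. \<exists>\<alpha>\<in>carrier N. \<exists>\<beta>\<in>carrier P. f = (\<lambda>a. actP \<beta> (actN \<alpha> a))}"

lemma FPN_iso:
  assumes g: "game A leq cf pol N actN P actP lam"
  shows "iso_family A leq cf pol (graphs A leq cf (FPN N actN P actP))"
proof (rule graphs_iso)
  note fN = act_facts[OF game_facts(1)[OF g]] and fP = act_facts[OF game_facts(2)[OF g]]
  show "\<forall>f\<in>FPN N actN P actP. automorphism A leq cf pol f"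
  proof
    fix f assume "f \<in> FPN N actN P actP"
    then obtain \<alpha> \<beta> where ab: "\<alpha> \<in> carrier N" "\<beta> \<in> carrier P" "f = (\<lambda>a. actP \<beta> (actN \<alpha> a))"
      unfolding FPN_def by blast
    have "automorphism A leq cf pol (actP \<beta> \<circ> actN \<alpha>)"
      using aut_comp fN(3) fP(3) ab by blast
    then show "automorphism A leq cf pol f" using ab by (simp add: comp_def)
  qed
  show "\<forall>f\<in>FPN N actN P actP. \<forall>g\<in>FPN N actN P actP. \<exists>h\<in>FPN N actN P actP. \<forall>a\<in>A. h a = g (f a)"
  proof (intro ballI)
    fix f h assume "f \<in> FPN N actN P actP" "h \<in> FPN N actN P actP"
    then obtain \<alpha>1 \<beta>1 \<alpha>2 \<beta>2 where ab: "\<alpha>1 \<in> carrier N" "\<beta>1 \<in> carrier P" "f = (\<lambda>a. actP \<beta>1 (actN \<alpha>1 a))"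
      "\<alpha>2 \<in> carrier N" "\<beta>2 \<in> carrier P" "h = (\<lambda>a. actP \<beta>2 (actN \<alpha>2 a))"
      unfolding FPN_def by blast
    obtain \<alpha>' \<beta>' where a': "\<alpha>' \<in> carrier N" "\<beta>' \<in> carrier P"
      and e: "\<forall>a\<in>A. actN \<alpha>2 (actP \<beta>1 a) = actP \<beta>' (actN \<alpha>' a)"
      using swap[OF g ab(4) ab(2)] by blast
    have c1: "\<beta>2 \<otimes>\<^bsub>P\<^esub> \<beta>' \<in> carrier P" using fP(1) ab a' by (simp add: group.is_monoid monoid.m_closed)
    have c2: "\<alpha>' \<otimes>\<^bsub>N\<^esub> \<alpha>1 \<in> carrier N" using fN(1) ab a' by (simp add: group.is_monoid monoid.m_closed)
    have "\<forall>a\<in>A. actP (\<beta>2 \<otimes>\<^bsub>P\<^esub> \<beta>') (actN (\<alpha>' \<otimes>\<^bsub>N\<^esub> \<alpha>1) a) = h (f a)"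
    proof
      fix a assume a: "a \<in> A"
      have a1: "actN \<alpha>1 a \<in> A" using fN(6) ab a by blast
      have a2: "actN \<alpha>' (actN \<alpha>1 a) \<in> A" using fN(6) a' a1 by blast
      have "actP (\<beta>2 \<otimes>\<^bsub>P\<^esub> \<beta>') (actN (\<alpha>' \<otimes>\<^bsub>N\<^esub> \<alpha>1) a) = actP \<beta>2 (actP \<beta>' (actN \<alpha>' (actN \<alpha>1 a)))"
        using fN(4) fP(4) ab a' a a1 a2 c2 fN(6) by simp
      also have "\<dots> = h (f a)" using e a1 ab by simp
      finally show "actP (\<beta>2 \<otimes>\<^bsub>P\<^esub> \<beta>') (actN (\<alpha>' \<otimes>\<^bsub>N\<^esub> \<alpha>1) a) = h (f a)" .
    qed
    moreover have "(\<lambda>a. actP (\<beta>2 \<otimes>\<^bsub>P\<^esub> \<beta>') (actN (\<alpha>' \<otimes>\<^bsub>N\<^esub> \<alpha>1) a)) \<in> FPN N actN P actP"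
      unfolding FPN_def using c1 c2 by blast
    ultimately show "\<exists>k\<in>FPN N actN P actP. \<forall>a\<in>A. k a = h (f a)" by (rule_tac bexI) auto
  qed
  have "\<one>\<^bsub>N\<^esub> \<in> carrier N" "\<one>\<^bsub>P\<^esub> \<in> carrier P" using fN(1) fP(1) by (simp_all add: group.is_monoid monoid.one_closed)
  moreover have "\<forall>a\<in>A. actP \<one>\<^bsub>P\<^esub> (actN \<one>\<^bsub>N\<^esub> a) = a" using fN(5) fP(5) by simp
  moreover have "(\<lambda>a. actP \<one>\<^bsub>P\<^esub> (actN \<one>\<^bsub>N\<^esub> a)) \<in> FPN N actN P actP"
    unfolding FPN_def using calculation by blast
  ultimately show "\<exists>h\<in>FPN N actN P actP. \<forall>a\<in>A. h a = a" by (rule_tac bexI) auto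
  show "\<forall>f\<in>FPN N actN P actP. \<exists>g\<in>FPN N actN P actP. \<forall>a\<in>A. g (f a) = a"
  proof
    fix f assume "f \<in> FPN N actN P actP"
    then obtain \<alpha> \<beta> where ab: "\<alpha> \<in> carrier N" "\<beta> \<in> carrier P" "f = (\<lambda>a. actP \<beta> (actN \<alpha> a))"
      unfolding FPN_def by blast
    have ia: "inv\<^bsub>N\<^esub> \<alpha> \<in> carrier N" using ab fN(1) by (simp add: group.inv_closed)
    have ib: "inv\<^bsub>P\<^esub> \<beta> \<in> carrier P" using ab fP(1) by (simp add: group.inv_closed)
    obtain \<alpha>' \<beta>' where a': "\<alpha>' \<in> carrier N" "\<beta>' \<in> carrier P"
      and e: "\<forall>a\<in>A. actN (inv\<^bsub>N\<^esub> \<alpha>) (actP (inv\<^bsub>P\<^esub> \<beta>) a) = actP \<beta>' (actN \<alpha>' a)"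
      using swap[OF g ia ib] by blast
    have "\<forall>a\<in>A. actP \<beta>' (actN \<alpha>' (f a)) = a"
    proof
      fix a assume a: "a \<in> A"
      have aA: "actN \<alpha> a \<in> A" using fN(6) ab a by blast
      have bA: "f a \<in> A" using fP(6) ab aA by simp
      have "actP (inv\<^bsub>P\<^esub> \<beta>) (f a) = actN \<alpha> a" using fP(7) ab aA by simp
      then have "actN (inv\<^bsub>N\<^esub> \<alpha>) (actP (inv\<^bsub>P\<^esub> \<beta>) (f a)) = a" using fN(7) ab a by simp
      then show "actP \<beta>' (actN \<alpha>' (f a)) = a" using e bA by simp
    qed
    moreover have "(\<lambda>a. actP \<beta>' (actN \<alpha>' a)) \<in> FPN N actN P actP" unfolding FPN_def using a' by blast
    ultimately show "\<exists>g\<in>FPN N actN P actP. \<forall>a\<in>A. g (f a) = a" by (rule_tac bexI) auto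
  qed
qed


lemma closure_eq:
  assumes g: "game A leq cf pol N actN P actP lam"
  shows "comp_closure (S_act A leq cf N actN \<union> S_act A leq cf P actP) = graphs A leq cf (FPN N actN P actP)"
proof
  note fN = act_facts[OF game_facts(1)[OF g]] and fP = act_facts[OF game_facts(2)[OF g]]
  have oN: "\<one>\<^bsub>N\<^esub> \<in> carrier N" and oP: "\<one>\<^bsub>P\<^esub> \<in> carrier P"
    using fN(1) fP(1) by (simp_all add: group.is_monoid monoid.one_closed)
  note iso = FPN_iso[OF g, unfolded iso_family_def]
  show "comp_closure (S_act A leq cf N actN \<union> S_act A leq cf P actP) \<subseteq> graphs A leq cf (FPN N actN P actP)"
  proof
    fix \<theta> assume "\<theta> \<in> comp_closure (S_act A leq cf N actN \<union> S_act A leq cf P actP)"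
    then show "\<theta> \<in> graphs A leq cf (FPN N actN P actP)"
    proof (induction rule: comp_closure.induct)
      case (base \<theta>)
      then show ?case
      proof
        assume "\<theta> \<in> S_act A leq cf N actN"
        then obtain x \<alpha> where x: "x \<in> conf A leq cf" "\<alpha> \<in> carrier N" "\<theta> = gr (actN \<alpha>) x"
          unfolding S_act_graphs graphs_def by auto
        have "\<theta> = gr (\<lambda>a. actP \<one>\<^bsub>P\<^esub> (actN \<alpha> a)) x" unfolding x(3)
          using fP(5) fN(6) x(2) conf_sub[OF x(1)] by (intro gr_cong) auto
        moreover have "(\<lambda>a. actP \<one>\<^bsub>P\<^esub> (actN \<alpha> a)) \<in> FPN N actN P actP" unfolding FPN_def using x oP by blast
        ultimately show ?thesis using x(1) unfolding graphs_def by blast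
      next
        assume "\<theta> \<in> S_act A leq cf P actP"
        then obtain x \<beta> where x: "x \<in> conf A leq cf" "\<beta> \<in> carrier P" "\<theta> = gr (actP \<beta>) x"
          unfolding S_act_graphs graphs_def by auto
        have "\<theta> = gr (\<lambda>a. actP \<beta> (actN \<one>\<^bsub>N\<^esub> a)) x" unfolding x(3)
          using fN(5) conf_sub[OF x(1)] by (intro gr_cong) auto
        moreover have "(\<lambda>a. actP \<beta> (actN \<one>\<^bsub>N\<^esub> a)) \<in> FPN N actN P actP" unfolding FPN_def using x oN by blast
        ultimately show ?thesis using x(1) unfolding graphs_def by blast
      qed
    next
      case (comp \<theta> \<theta>')
      then show ?case using iso[THEN conjunct2, THEN conjunct2, THEN conjunct1] by blast
    qed
  qed
  show "graphs A leq cf (FPN N actN P actP) \<subseteq> comp_closure (S_act A leq cf N actN \<union> S_act A leq cf P actP)"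
  proof
    fix \<theta> assume "\<theta> \<in> graphs A leq cf (FPN N actN P actP)"
    then obtain x \<alpha> \<beta> where x: "x \<in> conf A leq cf" "\<alpha> \<in> carrier N" "\<beta> \<in> carrier P"
      "\<theta> = gr (\<lambda>a. actP \<beta> (actN \<alpha> a)) x" unfolding graphs_def FPN_def by blast
    have t: "\<theta> = gr (actN \<alpha>) x O gr (actP \<beta>) (actN \<alpha> ` x)" unfolding gr_comp x(4) by (simp add: comp_def)
    have c: "actN \<alpha> ` x \<in> conf A leq cf" using aut_conf fN(3) x by blast
    have "gr (actN \<alpha>) x \<in> S_act A leq cf N actN" unfolding S_act_graphs graphs_def using x by blast
    moreover have "gr (actP \<beta>) (actN \<alpha> ` x) \<in> S_act A leq cf P actP" unfolding S_act_graphs graphs_def using x c by blast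
    ultimately show "\<theta> \<in> comp_closure (S_act A leq cf N actN \<union> S_act A leq cf P actP)"
      unfolding t by (intro comp_closure.comp comp_closure.base) auto
  qed
qed

lemma part2:
  assumes g: "game A leq cf pol N actN P actP lam"
  shows "thin_cg A leq cf pol
              (comp_closure (S_act A leq cf N actN \<union> S_act A leq cf P actP))
              (S_act A leq cf P actP) (S_act A leq cf N actN)"
  unfolding closure_eq[OF g] thin_cg_def
proof (intro conjI ballI impI)
  note fN = act_facts[OF game_facts(1)[OF g]] and fP = act_facts[OF game_facts(2)[OF g]]
  note naut = game_facts(3)[OF g] and paut = game_facts(4)[OF g]
  show es: "es A leq cf pol" by (rule fN(2))
  show "iso_family A leq cf pol (graphs A leq cf (FPN N actN P actP))" by (rule FPN_iso[OF g])
  show "iso_family A leq cf pol (S_act A leq cf P actP)" by (rule part1[OF game_facts(2)[OF g]])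
  show "iso_family A leq cf pol (S_act A leq cf N actN)" by (rule part1[OF game_facts(1)[OF g]])
  have oN: "\<one>\<^bsub>N\<^esub> \<in> carrier N" and oP: "\<one>\<^bsub>P\<^esub> \<in> carrier P"
    using fN(1) fP(1) by (simp_all add: group.is_monoid monoid.one_closed)
  show "S_act A leq cf P actP \<subseteq> graphs A leq cf (FPN N actN P actP)"
    using closure_eq[OF g] comp_closure.base by blast
  show "S_act A leq cf N actN \<subseteq> graphs A leq cf (FPN N actN P actP)"
    using closure_eq[OF g] comp_closure.base by blast
next
  note fN = act_facts[OF game_facts(1)[OF g]] and fP = act_facts[OF game_facts(2)[OF g]]
  note naut = game_facts(3)[OF g] and paut = game_facts(4)[OF g]
  fix \<theta> assume "\<theta> \<in> S_act A leq cf P actP \<inter> S_act A leq cf N actN"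
  then obtain x \<beta> x' \<alpha> where x: "x \<in> conf A leq cf" "\<beta> \<in> carrier P" "\<theta> = gr (actP \<beta>) x"
    and x': "x' \<in> conf A leq cf" "\<alpha> \<in> carrier N" "\<theta> = gr (actN \<alpha>) x'"
    unfolding S_act_graphs graphs_def by blast
  have xx: "x' = x" using x(3) x'(3) by (metis gr_Domain)
  have ag: "\<forall>a\<in>x. actN \<alpha> a = actP \<beta> a"
  proof
    fix a assume "a \<in> x"
    then have "(a, actP \<beta> a) \<in> gr (actN \<alpha>) x" using x(3) x'(3) xx gr_mem by metis
    then show "actN \<alpha> a = actP \<beta> a" using gr_mem by metis
  qed
  have "\<forall>a\<in>x. actP \<beta> a = a" using K[OF fN(2) _ _ x(1) ag] naut paut x'(2) x(2) by blast
  then have "\<theta> = Id_on x" unfolding x(3) gr_def Id_on_def by auto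
  then show "\<exists>x\<in>conf A leq cf. \<theta> = Id_on x" using x(1) by blast
next
  note fN = act_facts[OF game_facts(1)[OF g]] and fP = act_facts[OF game_facts(2)[OF g]]
  note naut = game_facts(3)[OF g] and paut = game_facts(4)[OF g]
  fix \<theta> \<theta>' assume t: "\<theta> \<in> S_act A leq cf P actP" and t': "\<theta>' \<in> graphs A leq cf (FPN N actN P actP)"
    and e: "ext_le_pol pol Plus \<theta> \<theta>'"
  obtain x \<beta> where x: "x \<in> conf A leq cf" "\<beta> \<in> carrier P" "\<theta> = gr (actP \<beta>) x"
    using t unfolding S_act_graphs graphs_def by blast
  obtain x' \<alpha>1 \<beta>1 where x': "x' \<in> conf A leq cf" "\<alpha>1 \<in> carrier N" "\<beta>1 \<in> carrier P"
      "\<theta>' = gr (\<lambda>a. actP \<beta>1 (actN \<alpha>1 a)) x'" using t' unfolding graphs_def FPN_def by blast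
  have sub: "subset_pol pol Plus x x'" and r: "restr \<theta>' x = \<theta>"
    using e x(3) x'(4) unfolding ext_le_pol_def ext_le_def by auto
  have xx': "x \<subseteq> x'" using sub unfolding subset_pol_def by auto
  have ag: "\<forall>a\<in>x. actP \<beta>1 (actN \<alpha>1 a) = actP \<beta> a"
  proof
    fix a assume a: "a \<in> x"
    then have "(a, actP \<beta>1 (actN \<alpha>1 a)) \<in> restr \<theta>' x" using xx' unfolding x'(4) restr_def gr_def by auto
    then show "actP \<beta>1 (actN \<alpha>1 a) = actP \<beta> a" unfolding r x(3) gr_def by auto
  qed
  have ib: "inv\<^bsub>P\<^esub> \<beta>1 \<otimes>\<^bsub>P\<^esub> \<beta> \<in> carrier P" using fP(1) x(2) x'(3)
    by (simp add: group.inv_closed group.is_monoid monoid.m_closed)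
  have ag2: "\<forall>a\<in>x. actN \<alpha>1 a = actP (inv\<^bsub>P\<^esub> \<beta>1 \<otimes>\<^bsub>P\<^esub> \<beta>) a"
  proof
    fix a assume a: "a \<in> x"
    have aA: "a \<in> A" using a conf_sub[OF x(1)] by auto
    have "actP (inv\<^bsub>P\<^esub> \<beta>1 \<otimes>\<^bsub>P\<^esub> \<beta>) a = actP (inv\<^bsub>P\<^esub> \<beta>1) (actP \<beta> a)"
      using fP(4) fP(1) x(2) x'(3) aA by (simp add: group.inv_closed)
    also have "\<dots> = actP (inv\<^bsub>P\<^esub> \<beta>1) (actP \<beta>1 (actN \<alpha>1 a))" using ag a by simp
    also have "\<dots> = actN \<alpha>1 a" using fP(7) fN(6) x'(2,3) aA by simp
    finally show "actN \<alpha>1 a = actP (inv\<^bsub>P\<^esub> \<beta>1 \<otimes>\<^bsub>P\<^esub> \<beta>) a" by simp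
  qed
  have "\<forall>a\<in>x. actP (inv\<^bsub>P\<^esub> \<beta>1 \<otimes>\<^bsub>P\<^esub> \<beta>) a = a"
    using K[OF fN(2) _ _ x(1) ag2] naut paut x'(2) ib by blast
  then have "fixes_conf (actN \<alpha>1) x" using ag2 unfolding fixes_conf_def by simp
  then have "fixes_conf (actN \<alpha>1) x'" using naut x'(2) x(1) x'(1) sub unfolding neg_aut_def by blast
  then have "\<theta>' = gr (actP \<beta>1) x'" unfolding x'(4) fixes_conf_def by (intro gr_cong) simp
  then show "\<theta>' \<in> S_act A leq cf P actP" unfolding S_act_graphs graphs_def using x'(1,3) by blast
next
  note fN = act_facts[OF game_facts(1)[OF g]] and fP = act_facts[OF game_facts(2)[OF g]]
  note naut = game_facts(3)[OF g] and paut = game_facts(4)[OF g]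
  fix \<theta> \<theta>' assume t: "\<theta> \<in> S_act A leq cf N actN" and t': "\<theta>' \<in> graphs A leq cf (FPN N actN P actP)"
    and e: "ext_le_pol pol Minus \<theta> \<theta>'"
  obtain x \<alpha> where x: "x \<in> conf A leq cf" "\<alpha> \<in> carrier N" "\<theta> = gr (actN \<alpha>) x"
    using t unfolding S_act_graphs graphs_def by blast
  obtain x' \<alpha>1 \<beta>1 where x': "x' \<in> conf A leq cf" "\<alpha>1 \<in> carrier N" "\<beta>1 \<in> carrier P"
      "\<theta>' = gr (\<lambda>a. actP \<beta>1 (actN \<alpha>1 a)) x'" using t' unfolding graphs_def FPN_def by blast
  obtain \<alpha>2 \<beta>2 where ab2: "\<alpha>2 \<in> carrier N" "\<beta>2 \<in> carrier P"
    and sw: "\<forall>a\<in>A. actP \<beta>1 (actN \<alpha>1 a) = actN \<alpha>2 (actP \<beta>2 a)"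
    using swap2[OF g x'(2,3)] by blast
  have t2: "\<theta>' = gr (\<lambda>a. actN \<alpha>2 (actP \<beta>2 a)) x'" unfolding x'(4)
    using sw conf_sub[OF x'(1)] by (intro gr_cong) auto
  have sub: "subset_pol pol Minus x x'" and r: "restr \<theta>' x = \<theta>"
    using e x(3) x'(4) unfolding ext_le_pol_def ext_le_def by auto
  have xx': "x \<subseteq> x'" using sub unfolding subset_pol_def by auto
  have ag: "\<forall>a\<in>x. actN \<alpha>2 (actP \<beta>2 a) = actN \<alpha> a"
  proof
    fix a assume a: "a \<in> x"
    then have "(a, actN \<alpha>2 (actP \<beta>2 a)) \<in> restr \<theta>' x" using xx' unfolding t2 restr_def gr_def by auto
    then show "actN \<alpha>2 (actP \<beta>2 a) = actN \<alpha> a" unfolding r x(3) gr_def by auto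
  qed
  have ia: "inv\<^bsub>N\<^esub> \<alpha>2 \<otimes>\<^bsub>N\<^esub> \<alpha> \<in> carrier N" using fN(1) x(2) ab2(1)
    by (simp add: group.inv_closed group.is_monoid monoid.m_closed)
  have ag2: "\<forall>a\<in>x. actN (inv\<^bsub>N\<^esub> \<alpha>2 \<otimes>\<^bsub>N\<^esub> \<alpha>) a = actP \<beta>2 a"
  proof
    fix a assume a: "a \<in> x"
    have aA: "a \<in> A" using a conf_sub[OF x(1)] by auto
    have "actN (inv\<^bsub>N\<^esub> \<alpha>2 \<otimes>\<^bsub>N\<^esub> \<alpha>) a = actN (inv\<^bsub>N\<^esub> \<alpha>2) (actN \<alpha> a)"
      using fN(4) fN(1) x(2) ab2(1) aA by (simp add: group.inv_closed)
    also have "\<dots> = actN (inv\<^bsub>N\<^esub> \<alpha>2) (actN \<alpha>2 (actP \<beta>2 a))" using ag a by simp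
    also have "\<dots> = actP \<beta>2 a" using fN(7) fP(6) ab2 aA by simp
    finally show "actN (inv\<^bsub>N\<^esub> \<alpha>2 \<otimes>\<^bsub>N\<^esub> \<alpha>) a = actP \<beta>2 a" .
  qed
  have "\<forall>a\<in>x. actP \<beta>2 a = a"
    using K[OF fN(2) _ _ x(1) ag2] naut paut ab2(2) ia by blast
  then have "fixes_conf (actP \<beta>2) x" unfolding fixes_conf_def by simp
  then have "fixes_conf (actP \<beta>2) x'" using paut ab2(2) x(1) x'(1) sub unfolding pos_aut_def by blast
  then have "\<theta>' = gr (actN \<alpha>2) x'" unfolding t2 fixes_conf_def by (intro gr_cong) simp
  then show "\<theta>' \<in> S_act A leq cf N actN" unfolding S_act_graphs graphs_def using x'(1) ab2(1) by blast
qed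

theorem mainTheorem6:
  shows "(\<forall>(E::'a set) leq cf pol (G::'g monoid) act.
            es_action E leq cf pol G act \<longrightarrow> iso_family E leq cf pol (S_act E leq cf G act)) \<and>
         (\<forall>(A::'a set) leq cf pol (N::'n monoid) actN (P::'p monoid) actP lam.
            game A leq cf pol N actN P actP lam \<longrightarrow>
            thin_cg A leq cf pol
              (comp_closure (S_act A leq cf N actN \<union> S_act A leq cf P actP))
              (S_act A leq cf P actP) (S_act A leq cf N actN))"
  using part1 part2 by blast

end
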